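(* Let $G$ be a finite group with $g_2(G)\geq N$, and suppose there is an exact sequence $1\to\mathbb{Z}_n\to G\to\mathbb{Z}_m\to1$. Then $\min\{m,n\}\geq N$.
   Context: For a finite group $G$ and positive integer $N$, $r_N(G)$ is the minimum number of generators among subgroups of $G$ of index at most $N$, and $g_k(G)=\max\{N : |G|\geq N \text{ and } r_N(G)\geq k\}$. *)

theory Defs
  imports "HOL-Algebra.Algebra"
begin

definition min_gens :: "('a, 'b) monoid_scheme \<Rightarrow> 'a set \<Rightarrow> nat" where
  "min_gens G H = (LEAST k. \<exists>S. S \<subseteq> H \<and> finite S \<and> card S = k \<and> generate G S = H)"

definition r_num :: "nat \<Rightarrow> ('a, 'b) monoid_scheme \<Rightarrow> nat" where
  "r_num N G = Min {min_gens G H | H. subgroup H G \<and> card (carrier G) \<le> N * card H}"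

definition g_num :: "nat \<Rightarrow> ('a, 'b) monoid_scheme \<Rightarrow> nat" where
  "g_num k G = (let A = {N. 1 \<le> N \<and> N \<le> card (carrier G) \<and> k \<le> r_num N G}
                in if A = {} then 0 else Max A)"

end

theory Submission
  imports Defs
begin

lemma min_gens_le1:
  assumes "group G" "x \<in> carrier G"
  shows "min_gens G (generate G {x}) \<le> 1"
proof -
  have "\<exists>S. S \<subseteq> generate G {x} \<and> finite S \<and> card S = 1 \<and> generate G S = generate G {x}"
    by (rule exI[of _ "{x}"]) (auto intro: generate.incl)
  then show ?thesis unfolding min_gens_def by (rule Least_le)
qed

lemma key:
  assumes G: "group G" and fin: "finite (carrier G)"
    and gN: "g_num 2 G \<ge> N" and N1: "N \<ge> 1"
    and H: "subgroup H G" and idx: "card (carrier G) \<le> N * card H"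
    and mg: "min_gens G H \<le> 1"
  shows False
proof -
  define A where "A = {N. 1 \<le> N \<and> N \<le> card (carrier G) \<and> 2 \<le> r_num N G}"
  have gdef: "g_num 2 G = (if A = {} then 0 else Max A)"
    unfolding g_num_def A_def Let_def by simp
  have "A \<noteq> {}" using gN N1 gdef by (cases "A = {}") auto
  have finA: "finite A" unfolding A_def by auto
  define M where "M = Max A"
  have MA: "M \<in> A" using finA \<open>A \<noteq> {}\<close> M_def Max_in by blast
  have "M \<ge> N" using gN gdef \<open>A \<noteq> {}\<close> M_def by simp
  have r2: "2 \<le> r_num M G" using MA A_def by simp
  define B where "B = {min_gens G H | H. subgroup H G \<and> card (carrier G) \<le> M * card H}"
  have "B \<subseteq> (\<lambda>H. min_gens G H) ` Pow (carrier G)"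
    unfolding B_def using subgroup.subset by blast
  moreover have "finite ((\<lambda>H. min_gens G H) ` Pow (carrier G))" using fin by simp
  ultimately have finB: "finite B" by (rule finite_subset)
  have "card (carrier G) \<le> M * card H"
  proof -
    have "N * card H \<le> M * card H" using \<open>M \<ge> N\<close> by (rule mult_le_mono1)
    thus ?thesis using idx by linarith
  qed
  hence "min_gens G H \<in> B" unfolding B_def using H by blast
  hence "Min B \<le> min_gens G H" using finB by (rule Min_le[rotated])
  hence "Min B \<le> 1" using mg by linarith
  moreover have "r_num M G = Min B" unfolding r_num_def B_def by simp
  ultimately show False using r2 by simp
qed

theorem mainTheorem13:
  fixes G :: "('a, 'b) monoid_scheme" and N n m :: nat
  assumes "group G" and "finite (carrier G)"
    and "g_num 2 G \<ge> N"
    and "f \<in> mon (integer_mod_group n) G"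
    and "h \<in> epi G (integer_mod_group m)"
    and "f ` carrier (integer_mod_group n) = kernel G (integer_mod_group m) h"
  shows "min m n \<ge> N"
proof (cases "N = 0")
  case True then show ?thesis by simp
next
  case False
  hence N1: "N \<ge> 1" by simp
  interpret G: group G by fact
  have fhom: "f \<in> hom (integer_mod_group n) G" and finj: "inj_on f (carrier (integer_mod_group n))"
    using assms(4) unfolding mon_def by auto
  have hhom: "h \<in> hom G (integer_mod_group m)" and hsurj: "h ` carrier G = carrier (integer_mod_group m)"
    using assms(5) unfolding epi_def by auto
  interpret fh: group_hom "integer_mod_group n" G f
    by (simp add: group_hom_def group_hom_axioms_def fhom assms(1))
  interpret hh: group_hom G "integer_mod_group m" h
    by (simp add: group_hom_def group_hom_axioms_def hhom assms(1))
  have fsub: "f ` carrier (integer_mod_group n) \<subseteq> carrier G"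
    using fhom hom_carrier by blast
  have n0: "n > 0"
  proof (rule ccontr)
    assume "\<not> n > 0"
    hence "carrier (integer_mod_group n) = UNIV" by (simp add: carrier_integer_mod_group)
    moreover have "finite (f ` carrier (integer_mod_group n))"
      using fsub assms(2) finite_subset by blast
    ultimately show False using finj finite_imageD by fastforce
  qed
  have m0: "m > 0"
  proof (rule ccontr)
    assume "\<not> m > 0"
    hence "carrier (integer_mod_group m) = UNIV" by (simp add: carrier_integer_mod_group)
    moreover have "finite (h ` carrier G)" using assms(2) by simp
    ultimately show False using hsurj by simp
  qed
  have cn: "card (carrier (integer_mod_group n)) = n" using n0 by (simp add: carrier_integer_mod_group)
  have cm: "card (carrier (integer_mod_group m)) = m" using m0 by (simp add: carrier_integer_mod_group)
  define K where "K = kernel G (integer_mod_group m) h"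
  have cK: "card K = n" using K_def assms(6) card_image[OF finj] cn by simp
  have Ksub: "subgroup K G" using K_def hh.subgroup_kernel by simp
  have "card (carrier (G Mod K)) = card (carrier (integer_mod_group m))"
    using hh.FactGroup_iso[OF hsurj] iso_same_card K_def by blast
  hence "card (rcosets\<^bsub>G\<^esub> K) = m" using cm by (simp add: FactGroup_def)
  hence cG: "card (carrier G) = m * n"
    using G.lagrange[OF Ksub] cK by (simp add: order_def)
  have gen: "generate (integer_mod_group k) {1 mod int k} = carrier (integer_mod_group k)"
    if "k > 0" for k :: nat
  proof -
    interpret Z: group "integer_mod_group k" by simp
    have a: "1 mod int k \<in> carrier (integer_mod_group k)"
      using that by (simp add: carrier_integer_mod_group)
    show ?thesis
    proof
      show "generate (integer_mod_group k) {1 mod int k} \<subseteq> carrier (integer_mod_group k)"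
        using Z.generate_in_carrier a by blast
    next
      show "carrier (integer_mod_group k) \<subseteq> generate (integer_mod_group k) {1 mod int k}"
      proof
        fix y assume y: "y \<in> carrier (integer_mod_group k)"
        have "pow (integer_mod_group k) (1 mod int k) y = (y * (1 mod int k)) mod int k"
          by (rule int_pow_integer_mod_group)
        also have "\<dots> = y mod int k" by (simp add: mod_mult_right_eq)
        also have "\<dots> = y" using y that by (simp add: carrier_integer_mod_group)
        finally have eq: "pow (integer_mod_group k) (1 mod int k) y = y" .
        show "y \<in> generate (integer_mod_group k) {1 mod int k}"
          unfolding Z.generate_pow[OF a] mem_Collect_eq
          by (rule exI[of _ y]) (simp add: eq)
      qed
    qed
  qed
  have mN: "m \<ge> N"
  proof (rule ccontr)
    assume "\<not> m \<ge> N"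
    hence idx: "card (carrier G) \<le> N * card K" using cG cK by simp
    have a: "1 mod int n \<in> carrier (integer_mod_group n)"
      using n0 by (simp add: carrier_integer_mod_group)
    have "generate G (f ` {1 mod int n}) = f ` generate (integer_mod_group n) {1 mod int n}"
      using fh.generate_img a by blast
    hence "K = generate G {f (1 mod int n)}" using gen[OF n0] assms(6) K_def by simp
    moreover have "f (1 mod int n) \<in> carrier G" using a fsub by blast
    ultimately have "min_gens G K \<le> 1" using min_gens_le1[OF assms(1)] by simp
    then show False using key[OF assms(1,2,3) N1 Ksub idx] by simp
  qed
  have nN: "n \<ge> N"
  proof (rule ccontr)
    assume nlt: "\<not> n \<ge> N"
    have a: "1 mod int m \<in> carrier (integer_mod_group m)"
      using m0 by (simp add: carrier_integer_mod_group)
    hence "1 mod int m \<in> h ` carrier G" using hsurj by simp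
    then obtain x where x0: "1 mod int m = h x" and x1: "x \<in> carrier G" by (rule imageE)
    have x: "x \<in> carrier G" "h x = 1 mod int m" using x0 x1 by simp_all
    define H where "H = generate G {x}"
    have Hsub: "subgroup H G" unfolding H_def using x(1) by (intro G.generate_is_subgroup) simp
    have "generate (integer_mod_group m) (h ` {x}) = h ` generate G {x}"
      by (rule hh.generate_img) (simp add: x(1))
    hence "h ` H = carrier (integer_mod_group m)" using gen[OF m0] x(2) unfolding H_def by simp
    moreover have "finite H" using subgroup.subset[OF Hsub] assms(2) by (rule finite_subset)
    moreover have "card (h ` H) \<le> card H" using \<open>finite H\<close> by (rule card_image_le)
    ultimately have mH: "m \<le> card H" using cm by simp
    have "m * n \<le> card H * N" using mH nlt by (intro mult_le_mono) auto
    hence "card (carrier G) \<le> N * card H" using cG by (simp add: mult.commute)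
    moreover have "min_gens G H \<le> 1" unfolding H_def by (rule min_gens_le1[OF assms(1) x(1)])
    ultimately show False using key[OF assms(1,2,3) N1 Hsub] by simp
  qed
  show ?thesis using mN nN by simp
qed

end
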